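(* Let $D=(D_1,D_2)\in\mathcal{U}(n,s_1^ps_2^q)$, where $D_1\in\mathcal{U}(n,s_1^p)$ consists of $p$ qualitative factors with $s_1$ levels and $D_2\in\mathcal{U}(n,s_2^q)$ consists of $q$ quantitative factors with $s_2$ levels. If $s_2$ is odd, then $\mathrm{QQD}^2(D)\ge LB_{odd}$, where \begin{align*}LB_{odd}=&-\left(\frac{5s_1+1}{4s_1}\right)^p\left(\frac43\right)^q+\frac1n\left(\frac32\right)^{p+q}+\frac{n-1}{n}\left(\frac54\right)^p\left(\frac65\right)^{\frac{p(n-s_1)}{s_1(n-1)}}\left(\frac32\right)^{\frac{q(n-s_2)}{s_2(n-1)}}\prod_{i=1}^{(s_2-1)/2}\left(\frac32-\frac{2i(2s_2-2i)}{4s_2^2}\right)^{\frac{2nq}{s_2(n-1)}};\end{align*} if $s_2$ is even, then $\mathrm{QQD}^2(D)\ge LB_{even}$, where \begin{align*}LB_{even}=&-\left(\frac{5s_1+1}{4s_1}\right)^p\left(\frac43\right)^q+\frac1n\left(\frac32\right)^{p+q}+\frac{n-1}{n}\left(\frac54\right)^p\left(\frac65\right)^{\frac{p(n-s_1)}{s_1(n-1)}}\left(\frac32\right)^{\frac{q(n-s_2)}{s_2(n-1)}}\left(\frac54\right)^{\frac{nq}{s_2(n-1)}}\prod_{i=1}^{(s_2/2)-1}\left(\frac32-\frac{2i(2s_2-2i)}{4s_2^2}\right)^{\frac{2nq}{s_2(n-1)}}.\end{align*}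
   Context: A U-type design in $\mathcal{U}(n,s_1^{p}s_2^{q})$ is an $n\times(p+q)$ matrix whose first $p$ columns each take every value in $\{0,\dots,s_1-1\}$ equally often and whose last $q$ columns each take every value in $\{0,\dots,s_2-1\}$ equally often; the first $p$ columns are qualitative, the last $q$ quantitative. For quantitative columns a level $x$ is transformed to $(2x+1)/(2s_2)\in[0,1]$. Let $\chi=\prod_k\chi_k$, $\chi_k=\{0,\dots,s_1-1\}$ for $k\le p$, $\chi_k=[0,1]$ for $k>p$, and $F$ the uniform distribution on $\chi$. Kernel: $\mathcal{K}(t,z)=\prod_k\mathcal{K}_k(t_k,z_k)$ with $\mathcal{K}_k=(3/2)^{\delta_{t_kz_k}}(5/4)^{1-\delta_{t_kz_k}}$ for $k\le p$ ($\delta$ the Kronecker delta) and $\mathcal{K}_k=\frac32-|t_k-z_k|+|t_k-z_k|^2$ for $k>p$. For $D$ with (transformed) rows $x_1,\dots,x_n$, the squared qualitative-quantitative discrepancy is $\mathrm{QQD}^2(D)=\int_{\chi^2}\mathcal{K}\,dF\,dF-\frac2n\sum_i\int_\chi\mathcal{K}(t,x_i)dF(t)+\frac1{n^2}\sum_{i,j}\mathcal{K}(x_i,x_j)$. Empty products are $1$. *)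

theory Defs
  imports "HOL-Probability.Probability"
begin

text \<open>A design is a function D :: nat => nat => nat, D i k = level of run i (i < n)
  in factor k (k < p + q). Columns k < p are qualitative with s1 levels,
  columns p <= k < p + q are quantitative with s2 levels.\<close>

definition utype :: "nat \<Rightarrow> nat \<Rightarrow> nat \<Rightarrow> nat \<Rightarrow> nat \<Rightarrow> (nat \<Rightarrow> nat \<Rightarrow> nat) \<Rightarrow> bool" where
  "utype n s1 s2 p q D \<longleftrightarrow>
     (\<forall>i<n. \<forall>k<p. D i k < s1) \<and>
     (\<forall>i<n. \<forall>k\<in>{p..<p+q}. D i k < s2) \<and>
     (\<forall>k<p. \<forall>v<s1. \<forall>w<s1. card {i. i < n \<and> D i k = v} = card {i. i < n \<and> D i k = w}) \<and>
     (\<forall>k\<in>{p..<p+q}. \<forall>v<s2. \<forall>w<s2. card {i. i < n \<and> D i k = v} = card {i. i < n \<and> D i k = w})"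

definition coord_measure :: "nat \<Rightarrow> nat \<Rightarrow> nat \<Rightarrow> real measure" where
  "coord_measure s1 p k =
     (if k < p then uniform_count_measure (real ` {..<s1})
      else uniform_measure lborel {0..1})"

definition F_measure :: "nat \<Rightarrow> nat \<Rightarrow> nat \<Rightarrow> (nat \<Rightarrow> real) measure" where
  "F_measure s1 p q = PiM {..<p+q} (coord_measure s1 p)"

definition kernel_k :: "nat \<Rightarrow> nat \<Rightarrow> real \<Rightarrow> real \<Rightarrow> real" where
  "kernel_k p k t z =
     (if k < p then (if t = z then 3/2 else 5/4)
      else 3/2 - \<bar>t - z\<bar> + \<bar>t - z\<bar>^2)"

definition kernel :: "nat \<Rightarrow> nat \<Rightarrow> (nat \<Rightarrow> real) \<Rightarrow> (nat \<Rightarrow> real) \<Rightarrow> real" where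
  "kernel p q t z = (\<Prod>k<p+q. kernel_k p k (t k) (z k))"

definition trow :: "nat \<Rightarrow> nat \<Rightarrow> nat \<Rightarrow> (nat \<Rightarrow> nat \<Rightarrow> nat) \<Rightarrow> nat \<Rightarrow> nat \<Rightarrow> real" where
  "trow s2 p q D i k =
     (if k < p then real (D i k)
      else if k < p + q then (2 * real (D i k) + 1) / (2 * real s2)
      else undefined)"

definition QQD2 :: "nat \<Rightarrow> nat \<Rightarrow> nat \<Rightarrow> nat \<Rightarrow> nat \<Rightarrow> (nat \<Rightarrow> nat \<Rightarrow> nat) \<Rightarrow> real" where
  "QQD2 n s1 s2 p q D =
     (let F = F_measure s1 p q; K = kernel p q; x = trow s2 p q D in
       (\<integral>t. (\<integral>z. K t z \<partial>F) \<partial>F)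
       - 2 / real n * (\<Sum>i<n. \<integral>t. K t (x i) \<partial>F)
       + 1 / (real n)^2 * (\<Sum>i<n. \<Sum>j<n. K (x i) (x j)))"

end

theory Submission
  imports Defs
begin


abbreviation "UU \<equiv> uniform_measure lborel {0..1::real}"

lemma UU_eq: "UU = density lborel (\<lambda>x. ennreal (indicator {0..1::real} x))"
  unfolding uniform_measure_def by (simp add: ennreal_indicator divide_ennreal_def)

lemma prob_UU: "prob_space UU"
  by (rule prob_space_uniform_measure) auto

lemma UU_integral:
  fixes g :: "real \<Rightarrow> real"
  assumes "continuous_on UNIV g"
  shows "(\<integral>x. g x \<partial>UU) = integral {0..1} g"
proof -
  have gm: "g \<in> borel_measurable borel" using assms by (rule borel_measurable_continuous_onI)
  have "(\<integral>x. g x \<partial>UU) = (\<integral>x. indicator {0..1::real} x *\<^sub>R g x \<partial>lborel)"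
    unfolding UU_eq
  proof (rule integral_density)
    show "g \<in> borel_measurable lborel" using gm by simp
  qed auto
  also have "\<dots> = (LINT x : {0..1} | lborel. g x)" by (simp add: set_lebesgue_integral_def)
  also have "\<dots> = integral {0..1} g"
    by (rule set_borel_integral_eq_integral(2), rule borel_integrable_atLeastAtMost')
       (rule continuous_on_subset[OF assms], auto)
  finally show ?thesis .
qed

lemma UU_integrable:
  fixes g :: "real \<Rightarrow> real"
  assumes "g \<in> borel_measurable borel" "\<And>x. x \<in> {0..1} \<Longrightarrow> \<bar>g x\<bar> \<le> B"
  shows "integrable UU g"
proof -
  interpret prob_space UU by (rule prob_UU)
  show ?thesis
  proof (rule integrable_const_bound[where B=B])
    show "AE x in UU. norm (g x) \<le> B"
    proof (rule AE_uniform_measureI)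
      show "{0..1::real} \<in> sets lborel" by simp
      show "AE x in lborel. x \<in> {0..1} \<longrightarrow> norm (g x) \<le> B"
        using assms(2) by (intro AE_I2) simp
    qed
    have "sets UU = sets borel" by simp
    then show "g \<in> borel_measurable UU" using assms(1) measurable_cong_sets by blast
  qed
qed

lemma quant_int:
  fixes x :: real
  assumes "0 \<le> x" "x \<le> 1"
  shows "integral {0..1} (\<lambda>t. 3/2 - \<bar>t - x\<bar> + \<bar>t - x\<bar>^2) = 4/3"
proof -
  let ?f = "\<lambda>t::real. 3/2 - \<bar>t - x\<bar> + \<bar>t - x\<bar>^2"
  let ?F = "\<lambda>t::real. 3/2 * t + (x - t)^2/2 - (x - t)^3/3"
  let ?G = "\<lambda>t::real. 3/2 * t - (t - x)^2/2 + (t - x)^3/3"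
  have "((\<lambda>t. 3/2 - (x - t) + (x - t)^2) has_integral (?F x - ?F 0)) {0..x}"
    apply (rule fundamental_theorem_of_calculus[OF assms(1)])
    apply (simp only: has_real_derivative_iff_has_vector_derivative[symmetric])
    apply (rule derivative_eq_intros refl | simp)+
    done
  hence 1: "(?f has_integral (?F x - ?F 0)) {0..x}"
    by (rule has_integral_eq[rotated]) (auto simp: abs_if power2_eq_square)
  have "((\<lambda>t. 3/2 - (t - x) + (t - x)^2) has_integral (?G 1 - ?G x)) {x..1}"
    apply (rule fundamental_theorem_of_calculus[OF assms(2)])
    apply (simp only: has_real_derivative_iff_has_vector_derivative[symmetric])
    apply (rule derivative_eq_intros refl | simp)+
    apply (auto simp: field_simps)
    done
  hence 2: "(?f has_integral (?G 1 - ?G x)) {x..1}"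
    by (rule has_integral_eq[rotated]) (auto simp: abs_if power2_eq_square)
  have "(?f has_integral ((?F x - ?F 0) + (?G 1 - ?G x))) {0..1}"
    by (rule has_integral_combine[OF assms 1 2])
  moreover have "(?F x - ?F 0) + (?G 1 - ?G x) = 4/3"
    by (simp add: field_simps power2_eq_square power3_eq_cube; algebra)
  ultimately show ?thesis by (metis integral_unique)
qed



lemma prob_coord: "s1 \<ge> 1 \<Longrightarrow> prob_space (coord_measure s1 p k)"
  unfolding coord_measure_def by (auto intro!: prob_space_uniform_count_measure prob_UU simp: lessThan_empty_iff)

lemma psf: "s1 \<ge> 1 \<Longrightarrow> product_sigma_finite (coord_measure s1 p)"
  unfolding product_sigma_finite_def using prob_coord prob_space_imp_sigma_finite by blast

lemma ucm_integrable: "finite A \<Longrightarrow> integrable (uniform_count_measure A) (f :: _ \<Rightarrow> real)"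
  unfolding uniform_count_measure_def by (rule integrable_point_measure_finite)

lemma kernel_k_sym: "kernel_k p k t z = kernel_k p k z t"
  unfolding kernel_k_def by (auto simp: abs_minus_commute)

lemma qual_sum:
  assumes "c \<in> real ` {..<s1}"
  shows "(\<Sum>v\<in>real ` {..<s1}. (if v = c then 3/2 else 5/4 :: real)) = 3/2 + (real s1 - 1) * 5/4"
proof -
  have fin: "finite (real ` {..<s1})" by simp
  have s1: "s1 \<ge> 1" using assms by auto
  have "(\<Sum>v\<in>real ` {..<s1}. (if v = c then 3/2 else 5/4 :: real))
      = 3/2 + (\<Sum>v\<in>real ` {..<s1} - {c}. (if v = c then 3/2 else 5/4 :: real))"
    by (subst sum.remove[OF fin assms]) simp
  also have "(\<Sum>v\<in>real ` {..<s1} - {c}. (if v = c then 3/2 else 5/4 :: real)) = (\<Sum>v\<in>real ` {..<s1} - {c}. 5/4)"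
    by (rule sum.cong) auto
  also have "\<dots> = real (card (real ` {..<s1} - {c})) * 5/4" by simp
  also have "card (real ` {..<s1} - {c}) = s1 - 1"
    using assms by (simp add: card_image inj_on_def)
  finally show ?thesis using s1 by (simp add: of_nat_diff)
qed

lemma coord_int_fixed:
  assumes s1: "s1 \<ge> 1" and z: "z \<in> (if k < p then real ` {..<s1} else {0..1})"
  shows "(\<integral>t. kernel_k p k t z \<partial>coord_measure s1 p k) = (if k < p then (5 * real s1 + 1) / (4 * real s1) else 4/3)"
proof (cases "k < p")
  case True
  have "(\<integral>t. kernel_k p k t z \<partial>coord_measure s1 p k)
     = (\<Sum>v\<in>real ` {..<s1}. (if v = z then 3/2 else 5/4 :: real)) / real s1"
    using True by (simp add: coord_measure_def integral_uniform_count_measure kernel_k_def card_image)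
  also have "\<dots> = (5 * real s1 + 1) / (4 * real s1)"
    using z True s1 by (subst qual_sum) (auto simp: field_simps)
  finally show ?thesis using True by simp
next
  case False
  have "(\<integral>t. kernel_k p k t z \<partial>coord_measure s1 p k) = integral {0..1} (\<lambda>t. 3/2 - \<bar>t - z\<bar> + \<bar>t - z\<bar>^2)"
    using False by (simp add: coord_measure_def kernel_k_def UU_integral continuous_intros)
  also have "\<dots> = 4/3" using z False by (intro quant_int) auto
  finally show ?thesis using False by simp
qed

lemma quant_measurable: "(\<lambda>t::real. 3/2 - \<bar>t - z\<bar> + \<bar>t - z\<bar>^2) \<in> borel_measurable borel"
  by measurable

lemma coord_integrable_fixed:
  assumes s1: "s1 \<ge> 1"
  shows "integrable (coord_measure s1 p k) (\<lambda>t. kernel_k p k t z)"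
proof (cases "k < p")
  case True then show ?thesis by (simp add: coord_measure_def ucm_integrable)
next
  case False
  have "integrable UU (\<lambda>t::real. 3/2 - \<bar>t - z\<bar> + \<bar>t - z\<bar>^2)"
  proof (rule UU_integrable[OF quant_measurable])
    fix t :: real assume t: "t \<in> {0..1}"
    have "\<bar>t - z\<bar> \<le> 1 + \<bar>z\<bar>" using t by auto
    hence "\<bar>t - z\<bar>^2 \<le> (1 + \<bar>z\<bar>)^2" by (intro power_mono) auto
    thus "\<bar>3/2 - \<bar>t - z\<bar> + \<bar>t - z\<bar>^2\<bar> \<le> 3/2 + (1 + \<bar>z\<bar>) + (1 + \<bar>z\<bar>)^2"
      using \<open>\<bar>t - z\<bar> \<le> 1 + \<bar>z\<bar>\<close> abs_ge_zero[of "t-z"] zero_le_power2[of "\<bar>t - z\<bar>"]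
        zero_le_power2[of "1 + \<bar>z\<bar>"] unfolding abs_le_iff by linarith
  qed
  then show ?thesis using False by (simp add: coord_measure_def kernel_k_def)
qed

lemma prod_split: "(\<Prod>k<p+q. if k < p then a else b) = (a::real)^p * b^q"
proof (induction q)
  case 0
  then show ?case by (induction p) auto
next
  case (Suc q)
  then show ?case by (simp add: lessThan_Suc)
qed

lemma int_fixed:
  assumes s1: "s1 \<ge> 1"
    and z1: "\<forall>k<p. z k \<in> real ` {..<s1}" and z2: "\<forall>k\<in>{p..<p+q}. z k \<in> {0..1}"
  shows "(\<integral>t. kernel p q t z \<partial>F_measure s1 p q) = ((5 * real s1 + 1) / (4 * real s1))^p * (4/3)^q"
proof -
  have "(\<integral>t. kernel p q t z \<partial>F_measure s1 p q)
      = (\<Prod>k\<in>{..<p+q}. \<integral>t. kernel_k p k t (z k) \<partial>coord_measure s1 p k)"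
    unfolding kernel_def F_measure_def
    by (rule product_sigma_finite.product_integral_prod[OF psf[OF s1]])
       (auto intro: coord_integrable_fixed[OF s1])
  also have "\<dots> = (\<Prod>k<p+q. if k < p then (5 * real s1 + 1) / (4 * real s1) else 4/3)"
  proof (rule prod.cong[OF refl])
    fix k assume "k \<in> {..<p+q}"
    then have "z k \<in> (if k < p then real ` {..<s1} else {0..1})" using z1 z2 by auto
    then show "(\<integral>t. kernel_k p k t (z k) \<partial>coord_measure s1 p k) = (if k < p then (5 * real s1 + 1) / (4 * real s1) else 4/3)"
      by (rule coord_int_fixed[OF s1])
  qed
  also have "\<dots> = ((5 * real s1 + 1) / (4 * real s1))^p * (4/3)^q" by (rule prod_split)
  finally show ?thesis .
qed



lemma hq_meas: "(\<lambda>y. \<integral>z. (3/2 - \<bar>y - z\<bar> + \<bar>y - z\<bar>^2 :: real) \<partial>UU) \<in> borel_measurable borel"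
proof -
  interpret sigma_finite_measure UU using prob_UU prob_space_imp_sigma_finite by blast
  show ?thesis
  proof (rule borel_measurable_lebesgue_integral)
    have "sets (borel \<Otimes>\<^sub>M UU) = sets (borel \<Otimes>\<^sub>M (borel :: real measure))"
      by (rule sets_pair_measure_cong) auto
    moreover have "(\<lambda>(y, z). (3/2 - \<bar>y - z\<bar> + \<bar>y - z\<bar>^2 :: real)) \<in> borel_measurable (borel \<Otimes>\<^sub>M (borel :: real measure))"
      by measurable
    ultimately show "(\<lambda>(y, z). (3/2 - \<bar>y - z\<bar> + \<bar>y - z\<bar>^2 :: real)) \<in> borel_measurable (borel \<Otimes>\<^sub>M UU)"
      using measurable_cong_sets by blast
  qed
qed

definition hk :: "nat \<Rightarrow> nat \<Rightarrow> nat \<Rightarrow> real \<Rightarrow> real" where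
  "hk s1 p k y = (\<integral>z. kernel_k p k y z \<partial>coord_measure s1 p k)"

lemma hk_val:
  assumes s1: "s1 \<ge> 1" and y: "y \<in> (if k < p then real ` {..<s1} else {0..1})"
  shows "hk s1 p k y = (if k < p then (5 * real s1 + 1) / (4 * real s1) else 4/3)"
proof -
  have e: "(\<lambda>z. kernel_k p k y z) = (\<lambda>z. kernel_k p k z y)" by (rule ext) (rule kernel_k_sym)
  show ?thesis unfolding hk_def e by (rule coord_int_fixed[OF s1 y])
qed

lemma hk_int:
  assumes s1: "s1 \<ge> 1"
  shows "integrable (coord_measure s1 p k) (hk s1 p k) \<and>
    (\<integral>y. hk s1 p k y \<partial>coord_measure s1 p k) = (if k < p then (5 * real s1 + 1) / (4 * real s1) else 4/3)"
proof (cases "k < p")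
  case True
  have "(\<integral>y. hk s1 p k y \<partial>coord_measure s1 p k) = (\<Sum>v\<in>real ` {..<s1}. hk s1 p k v) / real s1"
    using True by (simp add: coord_measure_def integral_uniform_count_measure card_image)
  also have "\<dots> = (\<Sum>v\<in>real ` {..<s1}. (5 * real s1 + 1) / (4 * real s1)) / real s1"
    using True s1 by (intro arg_cong2[where f="(/)"] sum.cong refl) (auto simp: hk_val)
  also have "\<dots> = (5 * real s1 + 1) / (4 * real s1)"
    using s1 by (simp add: card_image)
  finally show ?thesis using True by (simp add: coord_measure_def ucm_integrable)
next
  case False
  have hkq: "hk s1 p k = (\<lambda>y. \<integral>z. (3/2 - \<bar>y - z\<bar> + \<bar>y - z\<bar>^2 :: real) \<partial>UU)"
    using False by (simp add: hk_def fun_eq_iff coord_measure_def kernel_k_def)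
  have meas: "hk s1 p k \<in> borel_measurable UU"
  proof -
    have "sets UU = sets borel" by simp
    then show ?thesis using hq_meas hkq measurable_cong_sets by metis
  qed
  have v: "\<And>y. y \<in> {0..1} \<Longrightarrow> hk s1 p k y = 4/3" using hk_val[OF s1] False by auto
  have ae: "AE y in UU. hk s1 p k y = 4/3"
    by (rule AE_uniform_measureI) (auto intro!: AE_I2 simp: v)
  have m: "hk s1 p k \<in> borel_measurable borel" using hq_meas hkq by simp
  have int: "integrable UU (hk s1 p k)"
    by (rule UU_integrable[OF m, where B="4/3"]) (simp add: v)
  interpret prob_space UU by (rule prob_UU)
  have "(\<integral>y. hk s1 p k y \<partial>UU) = (\<integral>y. 4/3 \<partial>UU)"
    by (rule integral_cong_AE[OF meas _ ae]) simp
  also have "\<dots> = 4/3" by simp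
  finally show ?thesis using False int by (simp add: coord_measure_def)
qed

lemma int_double:
  assumes s1: "s1 \<ge> 1"
  shows "(\<integral>t. (\<integral>z. kernel p q t z \<partial>F_measure s1 p q) \<partial>F_measure s1 p q) = ((5 * real s1 + 1) / (4 * real s1))^p * (4/3)^q"
proof -
  have inner: "(\<integral>z. kernel p q t z \<partial>F_measure s1 p q) = (\<Prod>k\<in>{..<p+q}. hk s1 p k (t k))" for t
    unfolding kernel_def F_measure_def hk_def
  proof (rule product_sigma_finite.product_integral_prod[OF psf[OF s1]])
    fix k show "integrable (coord_measure s1 p k) (\<lambda>z. kernel_k p k (t k) z)"
      using coord_integrable_fixed[OF s1, of p k "t k"] by (subst kernel_k_sym) simp
  qed simp
  have "(\<integral>t. (\<integral>z. kernel p q t z \<partial>F_measure s1 p q) \<partial>F_measure s1 p q)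
      = (\<integral>t. (\<Prod>k\<in>{..<p+q}. hk s1 p k (t k)) \<partial>F_measure s1 p q)" by (simp add: inner)
  also have "\<dots> = (\<Prod>k\<in>{..<p+q}. \<integral>y. hk s1 p k y \<partial>coord_measure s1 p k)"
    unfolding F_measure_def
    by (rule product_sigma_finite.product_integral_prod[OF psf[OF s1]]) (use hk_int[OF s1] in auto)
  also have "\<dots> = (\<Prod>k<p+q. if k < p then (5 * real s1 + 1) / (4 * real s1) else 4/3)"
    using hk_int[OF s1] by (intro prod.cong) auto
  also have "\<dots> = ((5 * real s1 + 1) / (4 * real s1))^p * (4/3)^q" by (rule prod_split)
  finally show ?thesis .
qed


lemma amgm:
  fixes f :: "'a \<Rightarrow> real"
  assumes fin: "finite P" and ne: "P \<noteq> {}" and pos: "\<And>x. x \<in> P \<Longrightarrow> f x > 0"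
  shows "real (card P) * exp ((\<Sum>x\<in>P. ln (f x)) / real (card P)) \<le> (\<Sum>x\<in>P. f x)"
proof -
  define N where "N = real (card P)"
  define S where "S = (\<Sum>x\<in>P. ln (f x))"
  define G where "G = exp (S / N)"
  have N: "N > 0" using fin ne by (simp add: N_def card_gt_0_iff)
  have G: "G > 0" by (simp add: G_def)
  have "\<And>x. x \<in> P \<Longrightarrow> ln (f x) - S / N \<le> f x / G - 1"
  proof -
    fix x assume x: "x \<in> P"
    have "ln (f x / G) \<le> f x / G - 1" using pos[OF x] G by (intro ln_le_minus_one) simp
    also have "ln (f x / G) = ln (f x) - S / N" using pos[OF x] G by (simp add: ln_div G_def)
    finally show "ln (f x) - S / N \<le> f x / G - 1" .
  qed
  hence "(\<Sum>x\<in>P. ln (f x) - S / N) \<le> (\<Sum>x\<in>P. f x / G - 1)" by (rule sum_mono)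
  hence "S - N * (S / N) \<le> (\<Sum>x\<in>P. f x) / G - N"
    by (simp add: sum_subtractf S_def N_def sum_divide_distrib)
  hence "0 \<le> (\<Sum>x\<in>P. f x) / G - N" using N by simp
  hence "N * G \<le> (\<Sum>x\<in>P. f x)" using G by (simp add: field_simps)
  thus ?thesis by (simp add: N_def S_def G_def)
qed

lemma group_sum:
  fixes g :: "nat \<Rightarrow> real" and a :: "nat \<Rightarrow> nat"
  assumes "\<forall>i<n. a i < s" and "\<forall>v<s. card {i. i < n \<and> a i = v} = c"
  shows "(\<Sum>i<n. g (a i)) = real c * (\<Sum>v<s. g v)"
proof -
  have "(\<Sum>i<n. g (a i)) = (\<Sum>v\<in>{..<s}. \<Sum>i\<in>{i\<in>{..<n}. a i = v}. g (a i))"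
    by (rule sum.group[symmetric]) (use assms(1) in auto)
  also have "\<dots> = (\<Sum>v\<in>{..<s}. real c * g v)"
  proof (rule sum.cong[OF refl])
    fix v assume v: "v \<in> {..<s}"
    have "(\<Sum>i\<in>{i\<in>{..<n}. a i = v}. g (a i)) = (\<Sum>i\<in>{i\<in>{..<n}. a i = v}. g v)" by simp
    also have "\<dots> = real (card {i\<in>{..<n}. a i = v}) * g v" by simp
    also have "{i\<in>{..<n}. a i = v} = {i. i < n \<and> a i = v}" by auto
    finally show "(\<Sum>i\<in>{i\<in>{..<n}. a i = v}. g (a i)) = real c * g v" using assms(2) v by simp
  qed
  finally show ?thesis by (simp add: sum_distrib_left)
qed

lemma group_sum2:
  fixes g :: "nat \<Rightarrow> nat \<Rightarrow> real" and a :: "nat \<Rightarrow> nat"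
  assumes "\<forall>i<n. a i < s" and "\<forall>v<s. card {i. i < n \<and> a i = v} = c"
  shows "(\<Sum>i<n. \<Sum>j<n. g (a i) (a j)) = real c ^ 2 * (\<Sum>v<s. \<Sum>w<s. g v w)"
proof -
  have "(\<Sum>i<n. \<Sum>j<n. g (a i) (a j)) = (\<Sum>i<n. real c * (\<Sum>w<s. g (a i) w))"
    by (rule sum.cong[OF refl]) (rule group_sum[OF assms])
  also have "\<dots> = real c * (\<Sum>i<n. (\<Sum>w<s. g (a i) w))" by (simp add: sum_distrib_left)
  also have "(\<Sum>i<n. (\<Sum>w<s. g (a i) w)) = real c * (\<Sum>v<s. \<Sum>w<s. g v w)"
    by (rule group_sum[OF assms])
  finally show ?thesis by (simp add: power2_eq_square)
qed

lemma offdiag_sum: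
  fixes h :: "nat \<Rightarrow> nat \<Rightarrow> real"
  shows "(\<Sum>(i,j)\<in>Sigma {..<n} (\<lambda>i. {..<n} - {i}). h i j) = (\<Sum>i<n. \<Sum>j<n. h i j) - (\<Sum>i<n. h i i)"
proof -
  have "(\<Sum>(i,j)\<in>Sigma {..<n} (\<lambda>i. {..<n} - {i}). h i j) = (\<Sum>i<n. \<Sum>j\<in>{..<n} - {i}. h i j)"
    by (rule sum.Sigma[symmetric]) auto
  also have "\<dots> = (\<Sum>i<n. (\<Sum>j<n. h i j) - h i i)"
    by (rule sum.cong[OF refl]) (simp add: sum_diff1)
  finally show ?thesis by (simp add: sum_subtractf)
qed

lemma card_offdiag: "card (Sigma {..<n} (\<lambda>i. {..<n} - {i})) = n * (n - 1)"
proof -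
  have "card (Sigma {..<n} (\<lambda>i. {..<n} - {i})) = (\<Sum>i<n. card ({..<n} - {i}))" by simp
  also have "\<dots> = (\<Sum>i<n. n - 1)" by (rule sum.cong) auto
  finally show ?thesis by simp
qed

lemma delta_sum:
  fixes \<alpha> \<beta> :: real
  assumes "v < s"
  shows "(\<Sum>w<s. if v = w then \<alpha> else \<beta>) = \<alpha> + (real s - 1) * \<beta>"
proof -
  have "(\<Sum>w<s. if v = w then \<alpha> else \<beta>) = \<alpha> + (\<Sum>w\<in>{..<s} - {v}. if v = w then \<alpha> else \<beta>)"
    using assms by (subst sum.remove[of _ v]) auto
  also have "(\<Sum>w\<in>{..<s} - {v}. if v = w then \<alpha> else \<beta>) = (\<Sum>w\<in>{..<s} - {v}. \<beta>)"
    by (rule sum.cong) auto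
  also have "\<dots> = (real s - 1) * \<beta>" using assms by (simp add: of_nat_diff)
  finally show ?thesis .
qed


lemma mod_shift_sum:
  fixes G :: "real \<Rightarrow> real"
  assumes v: "v < s" and sym: "\<And>d. d \<le> s \<Longrightarrow> G (real s - real d) = G (real d)"
  shows "(\<Sum>w<s. G \<bar>real v - real w\<bar>) = (\<Sum>d<s. G (real d))"
proof (rule sum.reindex_bij_witness[where j="\<lambda>w. (w + s - v) mod s" and i="\<lambda>d. (d + v) mod s"])
  have s0: "0 < s" using v by simp
  fix w assume "w \<in> {..<s}"
  then have w: "w < s" by simp
  have jw: "(w + s - v) mod s = (if v \<le> w then w - v else w + s - v)"
  proof (cases "v \<le> w")
    case True
    have e: "w + s - v = (w - v) + s" using True by simp
    have "(w + s - v) mod s = (w - v + s) mod s" using e by (rule arg_cong)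
    also have "(w - v + s) mod s = (w - v) mod s" by (rule mod_add_self2)
    also have "\<dots> = w - v" using w by (intro mod_less) linarith
    finally have "(w + s - v) mod s = w - v" .
    then show ?thesis using True by (simp only: if_True)
  next
    case False
    have "(w + s - v) mod s = w + s - v" using False v by (intro mod_less) linarith
    then show ?thesis using False by (simp only: if_False)
  qed
  show "(w + s - v) mod s \<in> {..<s}" using mod_less_divisor[OF s0, of "w + s - v"] by simp
  show "((w + s - v) mod s + v) mod s = w"
  proof (cases "v \<le> w")
    case True
    then have "(w + s - v) mod s + v = w" using jw by simp
    then show ?thesis using w by simp
  next
    case False
    then have "(w + s - v) mod s + v = w + s" using jw v by simp
    then show ?thesis using w by simp
  qed
  show "G (real ((w + s - v) mod s)) = G \<bar>real v - real w\<bar>"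
  proof (cases "v \<le> w")
    case True
    then have "real ((w + s - v) mod s) = \<bar>real v - real w\<bar>" using jw by (simp add: of_nat_diff)
    then show ?thesis by simp
  next
    case False
    then have "real ((w + s - v) mod s) = real s - real (v - w)" using jw v by (simp add: of_nat_diff)
    moreover have "\<bar>real v - real w\<bar> = real (v - w)" using False by (simp add: of_nat_diff)
    ultimately show ?thesis using sym[of "v - w"] v by simp
  qed
next
  have s0: "0 < s" using v by simp
  fix d assume "d \<in> {..<s}"
  then have d: "d < s" by simp
  have id: "(d + v) mod s = (if d + v < s then d + v else d + v - s)"
  proof (cases "d + v < s")
    case True then show ?thesis by simp
  next
    case False
    then have "(d + v) mod s = (d + v - s) mod s" by (intro le_mod_geq) linarith
    also have "\<dots> = d + v - s" using d v by (intro mod_less) linarith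
    finally show ?thesis using False by simp
  qed
  show "(d + v) mod s \<in> {..<s}" using mod_less_divisor[OF s0, of "d + v"] by simp
  show "((d + v) mod s + s - v) mod s = d"
  proof (cases "d + v < s")
    case True
    then have "(d + v) mod s + s - v = d + s" using id by simp
    then show ?thesis using d by simp
  next
    case False
    then have "(d + v) mod s + s - v = d" using id v by simp
    then show ?thesis using d by simp
  qed
qed

lemma odd_split:
  fixes g :: "nat \<Rightarrow> real"
  assumes s: "s = 2 * m + 1" and sym: "\<And>d. d \<le> s \<Longrightarrow> g (s - d) = g d"
  shows "(\<Sum>d<s. g d) = g 0 + 2 * (\<Sum>i=1..m. g i)"
proof -
  have "{..<s} = {0} \<union> {1..m} \<union> {m+1..2*m}" using s by auto
  then have "(\<Sum>d<s. g d) = g 0 + (\<Sum>i=1..m. g i) + (\<Sum>d=m+1..2*m. g d)"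
    by (simp add: sum.union_disjoint)
  also have "(\<Sum>d=m+1..2*m. g d) = (\<Sum>i=1..m. g i)"
  proof (rule sum.reindex_bij_witness[where j="\<lambda>d. s - d" and i="\<lambda>i. s - i"])
    fix d assume "d \<in> {m+1..2*m}" then show "s - (s - d) = d" "s - d \<in> {1..m}" "g (s - d) = g d"
      using s sym by auto
  next
    fix i assume "i \<in> {1..m}" then show "s - (s - i) = i" "s - i \<in> {m+1..2*m}" using s by auto
  qed
  finally show ?thesis by simp
qed

lemma even_split:
  fixes g :: "nat \<Rightarrow> real"
  assumes s: "s = 2 * m" and m: "m \<ge> 1" and sym: "\<And>d. d \<le> s \<Longrightarrow> g (s - d) = g d"
  shows "(\<Sum>d<s. g d) = g 0 + g m + 2 * (\<Sum>i=1..m-1. g i)"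
proof -
  have "{..<s} = {0} \<union> {1..m-1} \<union> {m} \<union> {m+1..2*m-1}" using s m by auto
  then have "(\<Sum>d<s. g d) = g 0 + (\<Sum>i=1..m-1. g i) + g m + (\<Sum>d=m+1..2*m-1. g d)"
    using m by (simp add: sum.union_disjoint)
  also have "(\<Sum>d=m+1..2*m-1. g d) = (\<Sum>i=1..m-1. g i)"
  proof (rule sum.reindex_bij_witness[where j="\<lambda>d. s - d" and i="\<lambda>i. s - i"])
    fix d assume "d \<in> {m+1..2*m-1}" then show "s - (s - d) = d" "s - d \<in> {1..m-1}" "g (s - d) = g d"
      using s sym by auto
  next
    fix i assume "i \<in> {1..m-1}" then show "s - (s - i) = i" "s - i \<in> {m+1..2*m-1}" using s by auto
  qed
  finally show ?thesis by simp
qed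

lemma sum_split: "(\<Sum>k<p+q. if k < p then a else b) = real p * (a::real) + real q * b"
proof (induction q)
  case 0
  then show ?case by (induction p) (auto simp: algebra_simps)
next
  case (Suc q)
  then show ?case by (simp add: lessThan_Suc algebra_simps)
qed



lemma expo_p:
  fixes n d s1 p l3 l5 :: real
  assumes "d \<noteq> 0" "n \<noteq> 0" "s1 \<noteq> 0" "n = d + 1"
  shows "(p * ((n/s1)^2 * s1 * (l3 + (s1-1) * l5)) - n * p * l3) / (n * d)
     = p * l5 + p * (n-s1)/(s1 * d) * (l3-l5)"
  using assms(1-3) apply (simp add: field_simps power2_eq_square) using assms(4) by algebra

lemma expo_q:
  fixes n d s2 q l3 L :: real
  assumes "d \<noteq> 0" "n \<noteq> 0" "s2 \<noteq> 0"
  shows "(q * ((n/s2)^2 * s2 * L) - n * q * l3) / (n * d)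
     = q * (n-s2)/(s2 * d) * l3 + n * q/(s2 * d) * (L - l3)"
  using assms(1-3) by (simp add: field_simps power2_eq_square)

lemma quad_pos: "(3/2 - a + a^2 :: real) > 0"
proof -
  have "3/2 - a + a^2 = (a - 1/2)^2 + 5/4" by (simp add: power2_eq_square field_simps)
  moreover have "(a - 1/2)^2 \<ge> 0" by simp
  ultimately show ?thesis by linarith
qed

lemma kk_pos: "kernel_k p k t z > 0"
  unfolding kernel_k_def using quad_pos[of "\<bar>t - z\<bar>"] by auto

lemma kernel_pos: "kernel p q t z > 0"
  unfolding kernel_def by (rule prod_pos) (use kk_pos in blast)

lemma kernel_diag: "kernel p q t t = (3/2)^(p+q)"
proof -
  have "\<And>k. kernel_k p k (t k) (t k) = 3/2" by (simp add: kernel_k_def)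
  then have "kernel p q t t = (\<Prod>k<p+q. (3/2::real))" unfolding kernel_def by (intro prod.cong) auto
  then show ?thesis by simp
qed

lemma ln_kernel: "ln (kernel p q t z) = (\<Sum>k<p+q. ln (kernel_k p k (t k) (z k)))"
proof -
  have "\<And>k. kernel_k p k (t k) (z k) \<noteq> 0" using kk_pos by (metis less_irrefl)
  then show ?thesis unfolding kernel_def by (intro ln_prod) auto
qed

definition Gq :: "nat \<Rightarrow> real \<Rightarrow> real" where
  "Gq s y = ln (3/2 - y / real s + (y / real s)^2)"

lemma Gq_sym: "s > 0 \<Longrightarrow> d \<le> s \<Longrightarrow> Gq s (real s - real d) = Gq s (real d)"
  unfolding Gq_def by (rule arg_cong[where f=ln]) (simp add: field_simps power2_eq_square)

lemma quant_kernel_val: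
  assumes "\<not> k < p" "s > 0"
  shows "ln (kernel_k p k ((2 * real v + 1) / (2 * real s)) ((2 * real w + 1) / (2 * real s)))
       = Gq s \<bar>real v - real w\<bar>"
proof -
  have "(2 * real v + 1) / (2 * real s) - (2 * real w + 1) / (2 * real s) = (real v - real w) / real s"
    using assms by (simp add: field_simps)
  then have "\<bar>(2 * real v + 1) / (2 * real s) - (2 * real w + 1) / (2 * real s)\<bar> = \<bar>real v - real w\<bar> / real s"
    using assms by simp
  then show ?thesis using assms by (simp add: kernel_k_def Gq_def power_divide)
qed

lemma col_qual:
  fixes D :: "nat \<Rightarrow> nat \<Rightarrow> nat"
  assumes s1: "s1 \<ge> 1" and k: "k < p"
    and rng: "\<forall>i<n. D i k < s1"
    and bal: "\<forall>v<s1. \<forall>w<s1. card {i. i < n \<and> D i k = v} = card {i. i < n \<and> D i k = w}"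
  shows "(\<Sum>i<n. \<Sum>j<n. ln (kernel_k p k (real (D i k)) (real (D j k))))
     = (real n / real s1)^2 * real s1 * (ln (3/2) + (real s1 - 1) * ln (5/4))"
proof -
  define c where "c = card {i. i < n \<and> D i k = 0}"
  have cc: "\<forall>v<s1. card {i. i < n \<and> D i k = v} = c"
  proof (intro allI impI)
    fix v assume v: "v < s1"
    show "card {i. i < n \<and> D i k = v} = c" unfolding c_def
      by (rule bal[rule_format]) (use v s1 in auto)
  qed
  have "(\<Sum>i<n. (\<lambda>_. 1::real) (D i k)) = real c * (\<Sum>v<s1. 1)" by (rule group_sum[OF rng cc])
  then have nc: "real n = real c * real s1" by simp
  have "(\<Sum>i<n. \<Sum>j<n. ln (kernel_k p k (real (D i k)) (real (D j k))))
      = real c ^ 2 * (\<Sum>v<s1. \<Sum>w<s1. ln (kernel_k p k (real v) (real w)))"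
    by (rule group_sum2[OF rng cc, where g="\<lambda>v w. ln (kernel_k p k (real v) (real w))"])
  also have "(\<Sum>v<s1. \<Sum>w<s1. ln (kernel_k p k (real v) (real w))) = (\<Sum>v<s1. ln (3/2) + (real s1 - 1) * ln (5/4))"
  proof (rule sum.cong[OF refl])
    fix v assume v: "v \<in> {..<s1}"
    have "(\<Sum>w<s1. ln (kernel_k p k (real v) (real w))) = (\<Sum>w<s1. if v = w then ln (3/2) else ln (5/4))"
      using k by (intro sum.cong refl) (simp add: kernel_k_def)
    also have "\<dots> = ln (3/2) + (real s1 - 1) * ln (5/4)" using v by (intro delta_sum) simp
    finally show "(\<Sum>w<s1. ln (kernel_k p k (real v) (real w))) = ln (3/2) + (real s1 - 1) * ln (5/4)" .
  qed
  also have "\<dots> = real s1 * (ln (3/2) + (real s1 - 1) * ln (5/4))" by simp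
  finally show ?thesis using nc s1 by (simp add: field_simps power2_eq_square)
qed

lemma col_quant:
  fixes D :: "nat \<Rightarrow> nat \<Rightarrow> nat"
  assumes s2: "s2 \<ge> 1" and k: "\<not> k < p"
    and rng: "\<forall>i<n. D i k < s2"
    and bal: "\<forall>v<s2. \<forall>w<s2. card {i. i < n \<and> D i k = v} = card {i. i < n \<and> D i k = w}"
  shows "(\<Sum>i<n. \<Sum>j<n. ln (kernel_k p k ((2 * real (D i k) + 1) / (2 * real s2)) ((2 * real (D j k) + 1) / (2 * real s2))))
     = (real n / real s2)^2 * real s2 * (\<Sum>d<s2. Gq s2 (real d))"
proof -
  define c where "c = card {i. i < n \<and> D i k = 0}"
  have cc: "\<forall>v<s2. card {i. i < n \<and> D i k = v} = c"
  proof (intro allI impI)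
    fix v assume v: "v < s2"
    show "card {i. i < n \<and> D i k = v} = c" unfolding c_def
      by (rule bal[rule_format]) (use v s2 in auto)
  qed
  have "(\<Sum>i<n. (\<lambda>_. 1::real) (D i k)) = real c * (\<Sum>v<s2. 1)" by (rule group_sum[OF rng cc])
  then have nc: "real n = real c * real s2" by simp
  have "(\<Sum>i<n. \<Sum>j<n. ln (kernel_k p k ((2 * real (D i k) + 1) / (2 * real s2)) ((2 * real (D j k) + 1) / (2 * real s2))))
      = real c ^ 2 * (\<Sum>v<s2. \<Sum>w<s2. ln (kernel_k p k ((2 * real v + 1) / (2 * real s2)) ((2 * real w + 1) / (2 * real s2))))"
    by (rule group_sum2[OF rng cc, where g="\<lambda>v w. ln (kernel_k p k ((2 * real v + 1) / (2 * real s2)) ((2 * real w + 1) / (2 * real s2)))"])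
  also have "(\<Sum>v<s2. \<Sum>w<s2. ln (kernel_k p k ((2 * real v + 1) / (2 * real s2)) ((2 * real w + 1) / (2 * real s2))))
      = (\<Sum>v<s2. \<Sum>d<s2. Gq s2 (real d))"
  proof (rule sum.cong[OF refl])
    fix v assume v: "v \<in> {..<s2}"
    have "(\<Sum>w<s2. ln (kernel_k p k ((2 * real v + 1) / (2 * real s2)) ((2 * real w + 1) / (2 * real s2))))
        = (\<Sum>w<s2. Gq s2 \<bar>real v - real w\<bar>)"
      using k s2 by (intro sum.cong refl quant_kernel_val) auto
    also have "\<dots> = (\<Sum>d<s2. Gq s2 (real d))"
      using v s2 by (intro mod_shift_sum Gq_sym) auto
    finally show "(\<Sum>w<s2. ln (kernel_k p k ((2 * real v + 1) / (2 * real s2)) ((2 * real w + 1) / (2 * real s2))))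
        = (\<Sum>d<s2. Gq s2 (real d))" .
  qed
  also have "\<dots> = real s2 * (\<Sum>d<s2. Gq s2 (real d))" by simp
  finally show ?thesis using nc s2 by (simp add: field_simps power2_eq_square)
qed


theorem corollary2:
  fixes n s1 s2 p q :: nat and D :: "nat \<Rightarrow> nat \<Rightarrow> nat"
  assumes "n \<ge> 2" and "s1 \<ge> 1" and "s2 \<ge> 1"
    and "utype n s1 s2 p q D"
  shows
   "(odd s2 \<longrightarrow> QQD2 n s1 s2 p q D \<ge>
       - (((5 * real s1 + 1) / (4 * real s1)) ^ p * (4/3) ^ q)
       + 1 / real n * (3/2) ^ (p + q)
       + (real n - 1) / real n * (5/4) ^ p
         * (6/5) powr (real p * (real n - real s1) / (real s1 * (real n - 1)))
         * (3/2) powr (real q * (real n - real s2) / (real s2 * (real n - 1)))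
         * (\<Prod>i=1..(s2 - 1) div 2.
              (3/2 - 2 * real i * (2 * real s2 - 2 * real i) / (4 * (real s2)^2))
                powr (2 * real n * real q / (real s2 * (real n - 1)))))
    \<and>
    (even s2 \<longrightarrow> QQD2 n s1 s2 p q D \<ge>
       - (((5 * real s1 + 1) / (4 * real s1)) ^ p * (4/3) ^ q)
       + 1 / real n * (3/2) ^ (p + q)
       + (real n - 1) / real n * (5/4) ^ p
         * (6/5) powr (real p * (real n - real s1) / (real s1 * (real n - 1)))
         * (3/2) powr (real q * (real n - real s2) / (real s2 * (real n - 1)))
         * (5/4) powr (real n * real q / (real s2 * (real n - 1)))
         * (\<Prod>i=1..s2 div 2 - 1.
              (3/2 - 2 * real i * (2 * real s2 - 2 * real i) / (4 * (real s2)^2))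
                powr (2 * real n * real q / (real s2 * (real n - 1)))))"
proof -
  have n2: "n \<ge> 2" and s1: "s1 \<ge> 1" and s2: "s2 \<ge> 1" using assms by auto
  have u1: "\<forall>i<n. \<forall>k<p. D i k < s1" using assms(4) unfolding utype_def by blast
  have u2: "\<forall>i<n. \<forall>k\<in>{p..<p+q}. D i k < s2" using assms(4) unfolding utype_def by blast
  have u3: "\<forall>k<p. \<forall>v<s1. \<forall>w<s1. card {i. i < n \<and> D i k = v} = card {i. i < n \<and> D i k = w}"
    using assms(4) unfolding utype_def by blast
  have u4: "\<forall>k\<in>{p..<p+q}. \<forall>v<s2. \<forall>w<s2. card {i. i < n \<and> D i k = v} = card {i. i < n \<and> D i k = w}"
    using assms(4) unfolding utype_def by blast
  define x where "x = trow s2 p q D"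
  define A where "A = ((5 * real s1 + 1) / (4 * real s1)) ^ p * (4/3 :: real) ^ q"
  define K where "K = (\<lambda>i j. kernel p q (x i) (x j))"
  define P where "P = Sigma {..<n} (\<lambda>i. {..<n} - {i})"
  define d where "d = real n - 1"
  define l3 where "l3 = ln (3/2 :: real)"
  define l5 where "l5 = ln (5/4 :: real)"
  define L where "L = (\<Sum>d<s2. Gq s2 (real d))"
  have nr: "real n \<ge> 2" using n2 by simp
  have d0: "d \<noteq> 0" "d > 0" using nr by (auto simp: d_def)
  have xq1: "x i k = real (D i k)" if "k < p" for i k using that by (simp add: x_def trow_def)
  have xq2: "x i k = (2 * real (D i k) + 1) / (2 * real s2)" if "\<not> k < p" "k < p + q" for i k
    using that by (simp add: x_def trow_def)
  have xin1: "\<forall>k<p. x i k \<in> real ` {..<s1}" if "i < n" for i using u1 that xq1 by auto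
  have xin2: "\<forall>k\<in>{p..<p+q}. x i k \<in> {0..1}" if "i < n" for i
  proof
    fix k assume k: "k \<in> {p..<p+q}"
    have "D i k < s2" using u2 that k by auto
    then have "D i k + 1 \<le> s2" by simp
    then have "real (D i k + 1) \<le> real s2" by (simp only: of_nat_le_iff)
    then have "2 * real (D i k) + 1 \<le> 2 * real s2" by simp
    then show "x i k \<in> {0..1}" using k s2 by (simp add: xq2 field_simps)
  qed
  have I2: "(\<integral>t. kernel p q t (x i) \<partial>F_measure s1 p q) = A" if "i < n" for i
    unfolding A_def by (rule int_fixed[OF s1 xin1[OF that] xin2[OF that]])
  have I1: "(\<integral>t. (\<integral>z. kernel p q t z \<partial>F_measure s1 p q) \<partial>F_measure s1 p q) = A"
    unfolding A_def by (rule int_double[OF s1])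
  have Qv: "QQD2 n s1 s2 p q D = A - 2 / real n * (real n * A) + 1 / (real n)^2 * (\<Sum>i<n. \<Sum>j<n. K i j)"
  proof -
    have "(\<Sum>i<n. \<integral>t. kernel p q t (x i) \<partial>F_measure s1 p q) = (\<Sum>i<n. A)"
      by (rule sum.cong) (auto simp: I2)
    then show ?thesis unfolding QQD2_def Let_def K_def x_def[symmetric] using I1 by simp
  qed
  have SS: "(\<Sum>i<n. \<Sum>j<n. K i j) = real n * (3/2)^(p+q) + (\<Sum>(i,j)\<in>P. K i j)"
    using offdiag_sum[of "\<lambda>i j. K i j" n] by (simp add: P_def K_def kernel_diag)
  have finP: "finite P" unfolding P_def by simp
  have "(0, 1) \<in> P" using n2 unfolding P_def by simp
  then have neP: "P \<noteq> {}" by blast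
  have NP: "real (card P) = real n * d"
    unfolding P_def card_offdiag using n2 by (simp add: d_def of_nat_diff)
  define LS where "LS = (\<Sum>(i,j)\<in>P. ln (K i j))"
  have am: "real n * d * exp (LS / (real n * d)) \<le> (\<Sum>(i,j)\<in>P. K i j)"
  proof -
    have "real (card P) * exp ((\<Sum>y\<in>P. ln (case_prod K y)) / real (card P)) \<le> (\<Sum>y\<in>P. case_prod K y)"
      by (rule amgm[OF finP neP]) (auto simp: K_def kernel_pos)
    moreover have "(\<Sum>y\<in>P. ln (case_prod K y)) = LS" unfolding LS_def by (rule sum.cong) auto
    ultimately show ?thesis using NP by simp
  qed
  define TQ where "TQ = (real n / real s1)^2 * real s1 * (l3 + (real s1 - 1) * l5)"
  define TR where "TR = (real n / real s2)^2 * real s2 * L"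
  have colsum: "(\<Sum>k<p+q. \<Sum>i<n. \<Sum>j<n. ln (kernel_k p k (x i k) (x j k))) = real p * TQ + real q * TR"
  proof -
    have "(\<Sum>k<p+q. \<Sum>i<n. \<Sum>j<n. ln (kernel_k p k (x i k) (x j k))) = (\<Sum>k<p+q. if k < p then TQ else TR)"
    proof (rule sum.cong[OF refl])
      fix k assume k: "k \<in> {..<p+q}"
      show "(\<Sum>i<n. \<Sum>j<n. ln (kernel_k p k (x i k) (x j k))) = (if k < p then TQ else TR)"
      proof (cases "k < p")
        case True
        have "(\<Sum>i<n. \<Sum>j<n. ln (kernel_k p k (x i k) (x j k)))
            = (\<Sum>i<n. \<Sum>j<n. ln (kernel_k p k (real (D i k)) (real (D j k))))"
          using True by (simp add: xq1)
        also have "\<dots> = TQ" unfolding TQ_def l3_def l5_def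
          by (rule col_qual[OF s1 True]) (use u1 u3 True in blast)+
        finally show ?thesis using True by simp
      next
        case False
        have kk: "k \<in> {p..<p+q}" using k False by auto
        have "(\<Sum>i<n. \<Sum>j<n. ln (kernel_k p k (x i k) (x j k)))
            = (\<Sum>i<n. \<Sum>j<n. ln (kernel_k p k ((2 * real (D i k) + 1) / (2 * real s2)) ((2 * real (D j k) + 1) / (2 * real s2))))"
          using False k by (simp add: xq2)
        also have "\<dots> = TR" unfolding TR_def L_def
          by (rule col_quant[OF s2 False]) (use u2 u4 kk in blast)+
        finally show ?thesis using False by simp
      qed
    qed
    also have "\<dots> = real p * TQ + real q * TR" by (rule sum_split)
    finally show ?thesis .
  qed
  have LSv: "LS = (real p * TQ - real n * real p * l3) + (real q * TR - real n * real q * l3)"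
  proof -
    have "LS = (\<Sum>i<n. \<Sum>j<n. ln (K i j)) - (\<Sum>i<n. ln (K i i))" unfolding LS_def P_def by (rule offdiag_sum)
    also have "(\<Sum>i<n. ln (K i i)) = real n * (real (p+q) * l3)" by (simp add: K_def kernel_diag l3_def ln_realpow)
    also have "(\<Sum>i<n. \<Sum>j<n. ln (K i j)) = (\<Sum>i<n. \<Sum>j<n. \<Sum>k<p+q. ln (kernel_k p k (x i k) (x j k)))"
      by (simp add: K_def ln_kernel)
    also have "\<dots> = (\<Sum>i<n. \<Sum>k<p+q. \<Sum>j<n. ln (kernel_k p k (x i k) (x j k)))"
      by (rule sum.cong[OF refl]) (rule sum.swap)
    also have "\<dots> = (\<Sum>k<p+q. \<Sum>i<n. \<Sum>j<n. ln (kernel_k p k (x i k) (x j k)))"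
      by (rule sum.swap)
    finally show ?thesis using colsum by (simp add: algebra_simps)
  qed
  have E: "LS / (real n * d) = real p * l5 + real p * (real n - real s1) / (real s1 * d) * (l3 - l5)
      + real q * (real n - real s2) / (real s2 * d) * l3 + real n * real q / (real s2 * d) * (L - l3)"
  proof -
    have "LS / (real n * d) = (real p * TQ - real n * real p * l3) / (real n * d) + (real q * TR - real n * real q * l3) / (real n * d)"
      unfolding LSv by (rule add_divide_distrib)
    also have "(real p * TQ - real n * real p * l3) / (real n * d) = real p * l5 + real p * (real n - real s1) / (real s1 * d) * (l3 - l5)"
      unfolding TQ_def using d0 nr s1 by (intro expo_p) (auto simp: d_def)
    also have "(real q * TR - real n * real q * l3) / (real n * d) = real q * (real n - real s2) / (real s2 * d) * l3 + real n * real q / (real s2 * d) * (L - l3)"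
      unfolding TR_def using d0 nr s2 by (intro expo_q) auto
    finally show ?thesis by simp
  qed
  have key: "QQD2 n s1 s2 p q D \<ge> - A + 1 / real n * (3/2)^(p+q) + d / real n * exp (LS / (real n * d))"
  proof -
    have "QQD2 n s1 s2 p q D = - A + 1 / real n * (3/2)^(p+q) + 1 / (real n)^2 * (\<Sum>(i,j)\<in>P. K i j)"
      unfolding Qv SS using nr by (simp add: field_simps power2_eq_square)
    moreover have "1 / (real n)^2 * (real n * d * exp (LS / (real n * d))) \<le> 1 / (real n)^2 * (\<Sum>(i,j)\<in>P. K i j)"
      using am by (intro mult_left_mono) auto
    moreover have "1 / (real n)^2 * (real n * d * exp (LS / (real n * d))) = d / real n * exp (LS / (real n * d))"
      using nr by (simp add: field_simps power2_eq_square)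
    ultimately show ?thesis by linarith
  qed
  have e5: "(5/4::real)^p = exp (real p * l5)" by (simp add: l5_def exp_of_nat_mult)
  have l65: "ln (6/5::real) = l3 - l5"
  proof -
    have "ln ((3/2) / (5/4) :: real) = ln (3/2) - ln (5/4)" by (rule ln_divide_pos) auto
    then show ?thesis by (simp add: l3_def l5_def)
  qed
  have pw: "b powr e = exp (e * ln b)" if "b > 0" for b e :: real using that by (simp add: powr_def)
  have base: "3/2 - 2 * real i * (2 * real s2 - 2 * real i) / (4 * (real s2)^2) = 3/2 - real i / real s2 + (real i / real s2)^2" for i
    using s2 by (simp add: field_simps power2_eq_square)
  have bprod: "(\<Prod>i\<in>I. (3/2 - 2 * real i * (2 * real s2 - 2 * real i) / (4 * (real s2)^2)) powr e)
      = exp (e * (\<Sum>i\<in>I. Gq s2 (real i)))" if "finite I" for I e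
  proof -
    have "(\<Prod>i\<in>I. (3/2 - 2 * real i * (2 * real s2 - 2 * real i) / (4 * (real s2)^2)) powr e)
        = (\<Prod>i\<in>I. exp (e * Gq s2 (real i)))"
      by (rule prod.cong[OF refl]) (unfold base, simp add: pw quad_pos Gq_def)
    also have "\<dots> = exp (\<Sum>i\<in>I. e * Gq s2 (real i))" using that by (simp add: exp_sum)
    finally show ?thesis by (simp add: sum_distrib_left)
  qed
  have G0: "Gq s2 0 = l3" by (simp add: Gq_def l3_def)
  have gsym: "\<And>dd. dd \<le> s2 \<Longrightarrow> Gq s2 (real (s2 - dd)) = Gq s2 (real dd)"
    using Gq_sym s2 by (simp add: of_nat_diff)
  show ?thesis
  proof (intro conjI impI)
    assume odd: "odd s2"
    define m where "m = (s2 - 1) div 2"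
    have sm: "s2 = 2 * m + 1" using odd unfolding m_def by presburger
    have Lo: "L - l3 = 2 * (\<Sum>i=1..m. Gq s2 (real i))"
      using odd_split[OF sm, of "\<lambda>dd. Gq s2 (real dd)"] gsym unfolding L_def by (simp add: G0)
    have "(5/4) ^ p
         * (6/5) powr (real p * (real n - real s1) / (real s1 * (real n - 1)))
         * (3/2) powr (real q * (real n - real s2) / (real s2 * (real n - 1)))
         * (\<Prod>i=1..(s2 - 1) div 2.
              (3/2 - 2 * real i * (2 * real s2 - 2 * real i) / (4 * (real s2)^2))
                powr (2 * real n * real q / (real s2 * (real n - 1))))
        = exp (LS / (real n * d))"
      unfolding E Lo m_def[symmetric] bprod[OF finite_atLeastAtMost] e5
      by (simp add: pw l65 exp_add[symmetric] d_def l3_def algebra_simps)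
    then show "QQD2 n s1 s2 p q D \<ge>
       - (((5 * real s1 + 1) / (4 * real s1)) ^ p * (4/3) ^ q)
       + 1 / real n * (3/2) ^ (p + q)
       + (real n - 1) / real n * (5/4) ^ p
         * (6/5) powr (real p * (real n - real s1) / (real s1 * (real n - 1)))
         * (3/2) powr (real q * (real n - real s2) / (real s2 * (real n - 1)))
         * (\<Prod>i=1..(s2 - 1) div 2.
              (3/2 - 2 * real i * (2 * real s2 - 2 * real i) / (4 * (real s2)^2))
                powr (2 * real n * real q / (real s2 * (real n - 1))))"
      using key unfolding A_def d_def by (simp only: mult.assoc)
  next
    assume ev: "even s2"
    define m where "m = s2 div 2"
    have sm: "s2 = 2 * m" using ev unfolding m_def by presburger
    have m1: "m \<ge> 1" using sm s2 by simp
    have Gm: "Gq s2 (real m) = l5" unfolding Gq_def l5_def using sm m1 by (simp add: field_simps power2_eq_square)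
    have Le: "L - l3 = l5 + 2 * (\<Sum>i=1..m-1. Gq s2 (real i))"
      using even_split[OF sm m1, of "\<lambda>dd. Gq s2 (real dd)"] gsym unfolding L_def by (simp add: G0 Gm)
    have "(5/4) ^ p
         * (6/5) powr (real p * (real n - real s1) / (real s1 * (real n - 1)))
         * (3/2) powr (real q * (real n - real s2) / (real s2 * (real n - 1)))
         * (5/4) powr (real n * real q / (real s2 * (real n - 1)))
         * (\<Prod>i=1..s2 div 2 - 1.
              (3/2 - 2 * real i * (2 * real s2 - 2 * real i) / (4 * (real s2)^2))
                powr (2 * real n * real q / (real s2 * (real n - 1))))
        = exp (LS / (real n * d))"
      unfolding E Le m_def[symmetric] bprod[OF finite_atLeastAtMost] e5
      by (simp add: pw l65 exp_add[symmetric] d_def l3_def l5_def algebra_simps)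
    then show "QQD2 n s1 s2 p q D \<ge>
       - (((5 * real s1 + 1) / (4 * real s1)) ^ p * (4/3) ^ q)
       + 1 / real n * (3/2) ^ (p + q)
       + (real n - 1) / real n * (5/4) ^ p
         * (6/5) powr (real p * (real n - real s1) / (real s1 * (real n - 1)))
         * (3/2) powr (real q * (real n - real s2) / (real s2 * (real n - 1)))
         * (5/4) powr (real n * real q / (real s2 * (real n - 1)))
         * (\<Prod>i=1..s2 div 2 - 1.
              (3/2 - 2 * real i * (2 * real s2 - 2 * real i) / (4 * (real s2)^2))
                powr (2 * real n * real q / (real s2 * (real n - 1))))"
      using key unfolding A_def d_def by (simp only: mult.assoc)
  qed
qed

end
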